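(* For every integer $d\ge 200$ and every even integer $n\le 2^{\lfloor d/200\rfloor}$ there is an $(n,d,\alpha,\beta)$-sequence with $\alpha=\sqrt{2\ln(d)/n}$ and $\beta=1/16$.
   Context: Let $X$ be a set with $|X|$ even. An equitable bipartition of $X$ is a partition $(X_0,X_1)$ with $|X_0|=|X_1|$. A sequence $\mathcal B=(X_{1,0},X_{1,1}),\dots,(X_{d,0},X_{d,1})$ of equitable bipartitions of $X$ is $\alpha$-orthogonal if $|X_{i,\ell}\cap X_{j,\ell'}|\le(\frac14+\alpha)|X|$ for all $1\le i<j\le d$ and $\ell,\ell'\in\{0,1\}$; it is $\beta$-balanced if for every $x\ne y\in X$ the number of indices $i$ with $x,y\in X_{i,0}$ or $x,y\in X_{i,1}$ is at most $(\frac12+\beta)d$. It is an $(n,d,\alpha,\beta)$-sequence if $|X|=n$, $|\mathcal B|=d$, and $\mathcal B$ is both $\alpha$-orthogonal and $\beta$-balanced. *)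

theory Defs
  imports Complex_Main
begin

definition part :: "'a set \<times> 'a set \<Rightarrow> bool \<Rightarrow> 'a set" where
  "part P l = (if l then snd P else fst P)"

definition equitable_bipartition :: "'a set \<Rightarrow> 'a set \<times> 'a set \<Rightarrow> bool" where
  "equitable_bipartition X P \<longleftrightarrow>
     fst P \<union> snd P = X \<and> fst P \<inter> snd P = {} \<and> card (fst P) = card (snd P)"

text \<open>A sequence of bipartitions is a list; list index i corresponds to index i+1 in the paper.\<close>
definition alpha_orthogonal :: "'a set \<Rightarrow> ('a set \<times> 'a set) list \<Rightarrow> real \<Rightarrow> bool" where
  "alpha_orthogonal X B \<alpha> \<longleftrightarrow>
     (\<forall>i j l l'. i < j \<and> j < length B \<longrightarrow>
        real (card (part (B ! i) l \<inter> part (B ! j) l')) \<le> (1/4 + \<alpha>) * real (card X))"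

definition beta_balanced :: "'a set \<Rightarrow> ('a set \<times> 'a set) list \<Rightarrow> real \<Rightarrow> bool" where
  "beta_balanced X B \<beta> \<longleftrightarrow>
     (\<forall>x\<in>X. \<forall>y\<in>X. x \<noteq> y \<longrightarrow>
        real (card {i. i < length B \<and>
                     ((x \<in> fst (B ! i) \<and> y \<in> fst (B ! i)) \<or> (x \<in> snd (B ! i) \<and> y \<in> snd (B ! i)))})
          \<le> (1/2 + \<beta>) * real (length B))"

definition ndab_sequence ::
  "'a set \<Rightarrow> ('a set \<times> 'a set) list \<Rightarrow> nat \<Rightarrow> nat \<Rightarrow> real \<Rightarrow> real \<Rightarrow> bool" where
  "ndab_sequence X B n d \<alpha> \<beta> \<longleftrightarrow>
     finite X \<and> even (card X) \<and> card X = n \<and> length B = d \<and>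
     (\<forall>P\<in>set B. equitable_bipartition X P) \<and>
     alpha_orthogonal X B \<alpha> \<and> beta_balanced X B \<beta>"

end

theory Submission
  imports Defs "HOL-Probability.Probability"
begin


lemma tail_count:
  fixes K :: "'a set" and \<epsilon> :: real
  assumes fin: "finite K" and ne: "K \<noteq> {}" and eps: "\<epsilon> \<ge> 0"
  shows "real (card {T \<in> Pow K. real (card K) / 2 + \<epsilon> \<le> real (card T)})
           \<le> 2 ^ card K * exp (- 2 * \<epsilon>\<^sup>2 / real (card K))"
proof -
  let ?k = "card K"
  have k: "?k > 0" using fin ne by (simp add: card_gt_0_iff)
  have bd: "binomial_distribution (1/2)" by unfold_locales auto
  have "binomial_pmf ?k (1/2) = map_pmf (\<lambda>f. card {x \<in> K. f x}) (Pi_pmf K False (\<lambda>_. bernoulli_pmf (1/2)))"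
    by (rule binomial_pmf_altdef') (use fin in auto)
  also have "\<dots> = map_pmf card (map_pmf (\<lambda>b. {x \<in> K. b x}) (Pi_pmf K False (\<lambda>_. bernoulli_pmf (1/2))))"
    by (simp add: pmf.map_comp o_def)
  also have "\<dots> = map_pmf card (pmf_of_set (Pow K))"
    using pmf_of_set_Pow_conv_bernoulli[OF fin] by simp
  finally have eq: "binomial_pmf ?k (1/2) = map_pmf card (pmf_of_set (Pow K))" .
  have "measure_pmf.prob (binomial_pmf ?k (1/2)) {x. real ?k * (1/2) + \<epsilon> \<le> real x}
        = measure_pmf.prob (pmf_of_set (Pow K)) {T. real ?k * (1/2) + \<epsilon> \<le> real (card T)}"
    by (simp add: eq vimage_def)
  also have "\<dots> = real (card (Pow K \<inter> {T. real ?k * (1/2) + \<epsilon> \<le> real (card T)})) / real (card (Pow K))"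
    by (rule measure_pmf_of_set) (use fin in auto)
  finally have "real (card (Pow K \<inter> {T. real ?k * (1/2) + \<epsilon> \<le> real (card T)})) / 2 ^ ?k
      \<le> exp (- 2 * \<epsilon>\<^sup>2 / real ?k)"
    using binomial_distribution.prob_ge[OF bd k eps] fin by (simp add: card_Pow)
  moreover have "Pow K \<inter> {T. real ?k * (1/2) + \<epsilon> \<le> real (card T)} = {T \<in> Pow K. real (card K) / 2 + \<epsilon> \<le> real (card T)}"
    by auto
  ultimately show ?thesis by (simp add: divide_le_eq mult.commute)
qed



lemma count_bij:
  fixes A :: "'a set" and K :: "'k set" and p q :: "'k \<Rightarrow> 'a" and e :: bool
  assumes finA: "finite A" and finK: "finite K" and inj: "inj_on p K"
    and pA: "p ` K \<subseteq> A" and qA: "q ` K \<subseteq> A - p ` K"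
  shows "card {c \<in> PiE_dflt A False (\<lambda>_. UNIV). Q {k\<in>K. c (p k) = (c (q k) = e)}}
         = card {T \<in> Pow K. Q T} * card (PiE_dflt (A - p ` K) False (\<lambda>_. UNIV))"
proof -
  define U where "U = PiE_dflt A False (\<lambda>_. UNIV :: bool set)"
  define U' where "U' = PiE_dflt (A - p ` K) False (\<lambda>_. UNIV :: bool set)"
  define F where "F = (\<lambda>c::'a\<Rightarrow>bool. ({k\<in>K. c (p k) = (c (q k) = e)}, (\<lambda>x. if x \<in> p ` K then False else c x)))"
  define G where "G = (\<lambda>(T, g::'a\<Rightarrow>bool) x. if x \<in> p ` K then ((inv_into K p x \<in> T) = (g (q (inv_into K p x)) = e)) else g x)"
  have qn: "q k \<notin> p ` K" if "k \<in> K" for k using qA that by auto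
  have qn2: "q b \<noteq> p a" if "a \<in> K" "b \<in> K" for a b using qn[OF that(2)] that(1) by auto
  have bij: "bij_betw F U (Pow K \<times> U')"
  proof (rule bij_betwI[where g = G])
    show "F \<in> U \<rightarrow> Pow K \<times> U'"
      using pA by (auto simp: F_def U_def U'_def PiE_dflt_def)
    show "G \<in> Pow K \<times> U' \<rightarrow> U"
      using pA qA by (auto simp: G_def U_def U'_def PiE_dflt_def)
    show "G (F c) = c" if "c \<in> U" for c
    proof
      fix x
      show "G (F c) x = c x"
      proof (cases "x \<in> p ` K")
        case True
        then obtain k where k: "k \<in> K" "x = p k" by auto
        have iv: "inv_into K p x = k" using k inj by simp
        have "q k \<notin> p ` K" using qn k by simp
        then show ?thesis using True k iv by (auto simp: F_def G_def)
      next
        case False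
        then show ?thesis by (simp add: F_def G_def)
      qed
    qed
    show "F (G z) = z" if "z \<in> Pow K \<times> U'" for z
    proof -
      obtain T g where z: "z = (T, g)" by (cases z)
      have T: "T \<subseteq> K" and g: "g \<in> U'" using that z by auto
      have gp: "g x = False" if "x \<in> p ` K" for x using g that by (auto simp: U'_def PiE_dflt_def)
      have 1: "{k\<in>K. G z (p k) = (G z (q k) = e)} = T"
      proof -
        have "G z (p k) = (G z (q k) = e) \<longleftrightarrow> k \<in> T" if "k \<in> K" for k
        proof -
          have iv: "inv_into K p (p k) = k" using that inj by simp
          have "q k \<notin> p ` K" using qn that by simp
          then show ?thesis using iv that by (auto simp: G_def z)
        qed
        then show ?thesis using T by auto
      qed
      have 2: "(\<lambda>x. if x \<in> p ` K then False else G z x) = g"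
        using gp by (auto simp: G_def z fun_eq_iff)
      show ?thesis unfolding F_def using 1 2 z by simp
    qed
  qed
  have sub: "{c \<in> U. Q (fst (F c))} \<subseteq> U" by auto
  have b2: "bij_betw F {c \<in> U. Q (fst (F c))} (F ` {c \<in> U. Q (fst (F c))})"
    by (rule bij_betw_imageI[OF inj_on_subset[OF bij_betw_imp_inj_on[OF bij] sub] refl])
  have img: "F ` {c \<in> U. Q (fst (F c))} = {T \<in> Pow K. Q T} \<times> U'"
  proof -
    have "F ` {c \<in> U. Q (fst (F c))} = {z \<in> F ` U. Q (fst z)}" by blast
    also have "F ` U = Pow K \<times> U'" using bij by (simp add: bij_betw_def)
    finally show ?thesis by auto
  qed
  have "card {c \<in> U. Q (fst (F c))} = card ({T \<in> Pow K. Q T} \<times> U')"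
    using bij_betw_same_card[OF b2] img by simp
  then show ?thesis by (simp add: U_def U'_def F_def card_cartesian_product)
qed


lemma bad_bound:
  fixes A :: "'a set" and K :: "'k set" and p q :: "'k \<Rightarrow> 'a" and e :: bool and \<epsilon> :: real
  assumes finA: "finite A" and finK: "finite K" and ne: "K \<noteq> {}" and inj: "inj_on p K"
    and pA: "p ` K \<subseteq> A" and qA: "q ` K \<subseteq> A - p ` K" and eps: "\<epsilon> \<ge> 0"
  shows "real (card {c \<in> PiE_dflt A False (\<lambda>_. UNIV). real (card K) / 2 + \<epsilon> \<le> real (card {k\<in>K. c (p k) = (c (q k) = e)})})
         \<le> real (card (PiE_dflt A False (\<lambda>_. UNIV))) * exp (- 2 * \<epsilon>\<^sup>2 / real (card K))"
proof -
  let ?U' = "card (PiE_dflt (A - p ` K) False (\<lambda>_. UNIV :: bool set))"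
  have 1: "card {c \<in> PiE_dflt A False (\<lambda>_. UNIV). real (card K) / 2 + \<epsilon> \<le> real (card {k\<in>K. c (p k) = (c (q k) = e)})}
      = card {T \<in> Pow K. real (card K) / 2 + \<epsilon> \<le> real (card T)} * ?U'"
    by (rule count_bij[OF finA finK inj pA qA])
  have 2: "card {c \<in> PiE_dflt A False (\<lambda>_. UNIV). (\<lambda>T. True) {k\<in>K. c (p k) = (c (q k) = e)}}
      = card {T \<in> Pow K. (\<lambda>T. True) T} * ?U'"
    by (rule count_bij[OF finA finK inj pA qA])
  have 3: "card (PiE_dflt A False (\<lambda>_. UNIV :: bool set)) = 2 ^ card K * ?U'"
  proof -
    have "{T \<in> Pow K. (\<lambda>T. True) T} = Pow K" by auto
    moreover have "{c \<in> PiE_dflt A False (\<lambda>_. UNIV :: bool set). True} = PiE_dflt A False (\<lambda>_. UNIV)" by simp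
    ultimately show ?thesis using 2 finK card_Pow[of K] by simp
  qed
  have "real (card {T \<in> Pow K. real (card K) / 2 + \<epsilon> \<le> real (card T)}) * real ?U'
       \<le> (2 ^ card K * exp (- 2 * \<epsilon>\<^sup>2 / real (card K))) * real ?U'"
    by (rule mult_right_mono[OF tail_count[OF finK ne eps]]) simp
  then show ?thesis unfolding 1 3 by (simp add: algebra_simps)
qed

lemma pairs_card:
  fixes Q :: "nat \<Rightarrow> bool \<Rightarrow> bool"
  assumes nb: "\<And>m. \<not> (Q m True \<and> Q m False)"
  shows "card {x\<in>{..<2*h}. Q (x div 2) (even x)} = card {m\<in>{..<h}. Q m True \<or> Q m False}"
proof -
  let ?S = "{x\<in>{..<2*h}. Q (x div 2) (even x)}"
  have inj: "inj_on (\<lambda>x. x div 2) ?S"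
  proof
    fix x y assume x: "x \<in> ?S" and y: "y \<in> ?S" and eq: "x div 2 = y div 2"
    have "even x = even y"
    proof (rule ccontr)
      assume "even x \<noteq> even y"
      then have "Q (x div 2) True \<and> Q (x div 2) False" using x y eq by (cases "even x") auto
      then show False using nb by blast
    qed
    then have "x mod 2 = y mod 2" by (metis even_iff_mod_2_eq_zero odd_iff_mod_2_eq_one)
    then show "x = y" using eq by (metis div_mult_mod_eq)
  qed
  have img: "(\<lambda>x. x div 2) ` ?S = {m\<in>{..<h}. Q m True \<or> Q m False}"
  proof
    show "(\<lambda>x. x div 2) ` ?S \<subseteq> {m\<in>{..<h}. Q m True \<or> Q m False}"
    proof
      fix m assume "m \<in> (\<lambda>x. x div 2) ` ?S"
      then obtain x where x: "x \<in> ?S" "m = x div 2" by auto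
      then show "m \<in> {m\<in>{..<h}. Q m True \<or> Q m False}" by (cases "even x") auto
    qed
    show "{m\<in>{..<h}. Q m True \<or> Q m False} \<subseteq> (\<lambda>x. x div 2) ` ?S"
    proof
      fix m assume m: "m \<in> {m\<in>{..<h}. Q m True \<or> Q m False}"
      show "m \<in> (\<lambda>x. x div 2) ` ?S"
      proof (cases "Q m True")
        case True
        then have "2*m \<in> ?S" using m by auto
        moreover have "m = (2*m) div 2" by simp
        ultimately show ?thesis by blast
      next
        case False
        then have "2*m+1 \<in> ?S" using m by auto
        moreover have "m = (2*m+1) div 2" by simp
        ultimately show ?thesis by blast
      qed
    qed
  qed
  show ?thesis using card_image[OF inj] img by simp
qed

lemma two_le_exp: "(2::real) \<le> exp (25/32)"
proof -
  have "(1 + (25/32) / real (3::nat)) ^ 3 \<le> exp (25/32::real)"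
    by (rule exp_ge_one_plus_x_over_n_power_n) auto
  moreover have "(2::real) \<le> (1 + (25/32) / real (3::nat)) ^ 3" by (simp add: power3_eq_cube)
  ultimately show ?thesis by linarith
qed


theorem lemma5p1:
  fixes d n :: nat
  assumes "d \<ge> 200" and "even n" and "n \<le> 2 ^ (d div 200)"
  shows "\<exists>(X :: nat set) B. ndab_sequence X B n d (sqrt (2 * ln (real d) / real n)) (1/16)"
proof (cases "n = 0")
  case True
  have "ndab_sequence ({}::nat set) (replicate d ({}, {})) n d (sqrt (2 * ln (real d) / real n)) (1/16)"
    using True by (auto simp: ndab_sequence_def equitable_bipartition_def alpha_orthogonal_def
        beta_balanced_def Defs.part_def)
  then show ?thesis by blast
next
  case False
  obtain h where nh: "n = 2 * h" using assms(2) by (auto elim: evenE)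
  have h1: "h \<ge> 1" using False nh by simp
  have d0: "d > 0" using assms(1) by simp
  define D where "D = {..<d}"
  define H where "H = {..<h}"
  define A where "A = D \<times> H"
  define U where "U = PiE_dflt A False (\<lambda>_. UNIV :: bool set)"
  define \<alpha> where "\<alpha> = sqrt (2 * ln (real d) / real n)"
  define \<epsilon>1 where "\<epsilon>1 = \<alpha> * real n"
  define \<epsilon>2 where "\<epsilon>2 = real d / 16"
  define IO where "IO = {z :: nat \<times> nat \<times> bool. fst z \<in> D \<and> fst (snd z) \<in> D \<and> fst z \<noteq> fst (snd z)}"
  define IB where "IB = {z :: nat \<times> nat \<times> bool. fst z \<in> H \<and> fst (snd z) \<in> H \<and> fst z \<noteq> fst (snd z)}"
  define BO where "BO = (\<lambda>(i,j,e). {c \<in> U. real (card H) / 2 + \<epsilon>1 \<le> real (card {m\<in>H. c (i,m) = (c (j,m) = e)})})"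
  define BB where "BB = (\<lambda>(m,m',e). {c \<in> U. real (card D) / 2 + \<epsilon>2 \<le> real (card {i\<in>D. c (i,m) = (c (i,m') = e)})})"
  have finA: "finite A" by (simp add: A_def D_def H_def)
  have finU: "finite U" unfolding U_def using finA by (intro finite_PiE_dflt) auto
  have cardD: "card D = d" and cardH: "card H = h" by (simp_all add: D_def H_def)
  have Hne: "H \<noteq> {}" proof - have "0 \<in> H" using h1 by (simp add: H_def) then show ?thesis by auto qed
  have Dne: "D \<noteq> {}" proof - have "0 \<in> D" using d0 by (simp add: D_def) then show ?thesis by auto qed
  have lnd: "ln (real d) > 0" using assms(1) by simp
  have \<alpha>0: "\<alpha> \<ge> 0" unfolding \<alpha>_def using lnd by simp
  have e1: "\<epsilon>1 \<ge> 0" unfolding \<epsilon>1_def using \<alpha>0 by simp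
  have e2: "\<epsilon>2 \<ge> 0" unfolding \<epsilon>2_def by simp
  define x1 where "x1 = exp (- 2 * \<epsilon>1\<^sup>2 / real h)"
  define x2 where "x2 = exp (- 2 * \<epsilon>2\<^sup>2 / real d)"
  have BO_le: "real (card (BO z)) \<le> real (card U) * x1" if "z \<in> IO" for z
  proof -
    obtain i j e where z: "z = (i,j,e)" by (cases z) auto
    have ij: "i \<in> D" "j \<in> D" "i \<noteq> j" using that z by (auto simp: IO_def)
    have "real (card {c \<in> U. real (card H) / 2 + \<epsilon>1 \<le> real (card {m\<in>H. c ((\<lambda>m. (i,m)) m) = (c ((\<lambda>m. (j,m)) m) = e)})})
        \<le> real (card U) * exp (- 2 * \<epsilon>1\<^sup>2 / real (card H))"
      unfolding U_def
      by (rule bad_bound[OF finA]) (use ij Hne e1 in \<open>auto simp: A_def H_def inj_on_def\<close>)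
    then show ?thesis by (simp add: BO_def z x1_def cardH)
  qed
  have BB_le: "real (card (BB z)) \<le> real (card U) * x2" if "z \<in> IB" for z
  proof -
    obtain m m' e where z: "z = (m,m',e)" by (cases z) auto
    have mm: "m \<in> H" "m' \<in> H" "m \<noteq> m'" using that z by (auto simp: IB_def)
    have "real (card {c \<in> U. real (card D) / 2 + \<epsilon>2 \<le> real (card {i\<in>D. c ((\<lambda>i. (i,m)) i) = (c ((\<lambda>i. (i,m')) i) = e)})})
        \<le> real (card U) * exp (- 2 * \<epsilon>2\<^sup>2 / real (card D))"
      unfolding U_def
      by (rule bad_bound[OF finA]) (use mm Dne e2 in \<open>auto simp: A_def D_def inj_on_def\<close>)
    then show ?thesis by (simp add: BB_def z x2_def cardD)
  qed
  have x1_eq: "x1 = 1 / real d ^ 8"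
  proof -
    have "\<epsilon>1\<^sup>2 = \<alpha>\<^sup>2 * (real n)\<^sup>2" by (simp add: \<epsilon>1_def power_mult_distrib)
    also have "\<alpha>\<^sup>2 = 2 * ln (real d) / real n" unfolding \<alpha>_def using lnd by simp
    finally have "\<epsilon>1\<^sup>2 = 2 * ln (real d) * real n" using False by (simp add: power2_eq_square)
    then have "- 2 * \<epsilon>1\<^sup>2 / real h = - (real 8 * ln (real d))" using nh h1 by (simp add: field_simps)
    then have "x1 = exp (- (real 8 * ln (real d)))" by (simp add: x1_def)
    also have "\<dots> = inverse (exp (ln (real d)) ^ 8)" by (simp add: exp_minus exp_of_nat_mult[symmetric])
    also have "\<dots> = 1 / real d ^ 8" using d0 by (simp add: field_simps)
    finally show ?thesis .
  qed
  have x2_eq: "x2 = exp (- (real d / 128))"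
    unfolding x2_def \<epsilon>2_def using d0 by (simp add: power2_eq_square field_simps)
  have cIO: "card IO \<le> 2 * d * d"
  proof -
    have "IO \<subseteq> D \<times> D \<times> (UNIV :: bool set)" by (auto simp: IO_def)
    then have "card IO \<le> card (D \<times> D \<times> (UNIV :: bool set))" by (intro card_mono) (auto simp: D_def)
    then show ?thesis by (simp add: card_cartesian_product cardD)
  qed
  have cIB: "card IB \<le> 2 * h * h"
  proof -
    have "IB \<subseteq> H \<times> H \<times> (UNIV :: bool set)" by (auto simp: IB_def)
    then have "card IB \<le> card (H \<times> H \<times> (UNIV :: bool set))" by (intro card_mono) (auto simp: H_def)
    then show ?thesis by (simp add: card_cartesian_product cardH)
  qed
  have finIO: "finite IO"
  proof -
    have "IO \<subseteq> D \<times> D \<times> (UNIV :: bool set)" by (auto simp: IO_def)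
    then show ?thesis by (rule finite_subset) (auto simp: D_def)
  qed
  have finIB: "finite IB"
  proof -
    have "IB \<subseteq> H \<times> H \<times> (UNIV :: bool set)" by (auto simp: IB_def)
    then show ?thesis by (rule finite_subset) (auto simp: H_def)
  qed
  have num1: "real (card IO) * x1 \<le> 1/4"
  proof -
    have "real (card IO) * x1 \<le> real (2 * d * d) * (1 / real d ^ 8)"
      unfolding x1_eq by (rule mult_right_mono) (simp only: of_nat_le_iff cIO, simp)
    also have "\<dots> = 2 / real d ^ 6" using d0 by (simp add: field_simps power_def eval_nat_numeral)
    also have "\<dots> \<le> 1/4"
    proof -
      have "(8::real) \<le> 200 ^ 6" by simp
      also have "(200::real) ^ 6 \<le> real d ^ 6" using assms(1) by (intro power_mono) auto
      finally show ?thesis using d0 by (simp add: field_simps)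
    qed
    finally show ?thesis .
  qed
  have num2: "real (card IB) * x2 \<le> 1/2"
  proof -
    define k where "k = d div 200"
    have dk: "200 * real k \<le> real d" unfolding k_def
      by (metis of_nat_le_iff of_nat_mult of_nat_numeral div_times_less_eq_dividend mult.commute)
    have hk: "real (2*h) \<le> 2 ^ k" using assms(3) nh unfolding k_def
      by (metis of_nat_le_iff of_nat_numeral of_nat_power)
    have "(2 * real h) ^ 2 \<le> (2 ^ k) ^ 2" using hk by (intro power_mono) auto
    also have "((2::real) ^ k) ^ 2 = 2 ^ (2 * k)" by (simp add: power_mult[symmetric] mult.commute)
    also have "(2::real) ^ (2 * k) \<le> exp (25/32) ^ (2 * k)" using two_le_exp by (intro power_mono) auto
    also have "\<dots> = exp (real (2 * k) * (25/32))" by (rule exp_of_nat_mult[symmetric])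
    finally have h2: "4 * (real h)\<^sup>2 \<le> exp (real k * (25/16))" by (simp add: power_mult_distrib mult.commute)
    have "real (card IB) * x2 \<le> real (2 * h * h) * exp (- (real d / 128))"
      unfolding x2_eq by (rule mult_right_mono) (simp only: of_nat_le_iff cIB, simp)
    also have "\<dots> \<le> real (2 * h * h) * exp (- (real k * (25/16)))"
      by (rule mult_left_mono) (use dk in auto)
    also have "\<dots> = (4 * (real h)\<^sup>2 * exp (- (real k * (25/16)))) / 2" by (simp add: power2_eq_square)
    also have "\<dots> \<le> (exp (real k * (25/16)) * exp (- (real k * (25/16)))) / 2"
      by (intro divide_right_mono mult_right_mono h2) auto
    also have "\<dots> = 1/2" by (simp add: exp_minus)
    finally show ?thesis .
  qed
  define Bad where "Bad = (\<Union>z\<in>IO. BO z) \<union> (\<Union>z\<in>IB. BB z)"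
  have cU: "card U > 0"
  proof -
    have "(\<lambda>_. False) \<in> U" by (simp add: U_def PiE_dflt_def)
    then show ?thesis using finU card_gt_0_iff by blast
  qed
  have "real (card Bad) \<le> real (card (\<Union>z\<in>IO. BO z)) + real (card (\<Union>z\<in>IB. BB z))"
    unfolding Bad_def using card_Un_le of_nat_le_iff of_nat_add by metis
  also have "real (card (\<Union>z\<in>IO. BO z)) \<le> (\<Sum>z\<in>IO. real (card (BO z)))"
    using card_UN_le[OF finIO, of BO] by (metis of_nat_le_iff of_nat_sum)
  also have "\<dots> \<le> real (card IO) * (real (card U) * x1)"
    using sum_bounded_above[of IO "\<lambda>z. real (card (BO z))" "real (card U) * x1"] BO_le by auto
  also have "real (card (\<Union>z\<in>IB. BB z)) \<le> (\<Sum>z\<in>IB. real (card (BB z)))"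
    using card_UN_le[OF finIB, of BB] by (metis of_nat_le_iff of_nat_sum)
  also have "\<dots> \<le> real (card IB) * (real (card U) * x2)"
    using sum_bounded_above[of IB "\<lambda>z. real (card (BB z))" "real (card U) * x2"] BB_le by auto
  also have "real (card IO) * (real (card U) * x1) + real (card IB) * (real (card U) * x2)
     = real (card U) * (real (card IO) * x1 + real (card IB) * x2)" by (simp add: algebra_simps)
  also have "\<dots> < real (card U) * 1"
    by (rule mult_strict_left_mono) (use num1 num2 cU in auto)
  finally have "card Bad < card U" by simp
  moreover have "Bad \<subseteq> U" by (auto simp: Bad_def BO_def BB_def)
  ultimately have "\<not> U \<subseteq> Bad" using card_mono[OF finite_subset[OF _ finU]] by (metis not_le)
  then obtain c where cU: "c \<in> U" and cB: "c \<notin> Bad" by blast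
  have GO: "real (card {m\<in>H. c (i,m) = (c (j,m) = e)}) < real h / 2 + \<epsilon>1"
    if "i < d" "j < d" "i \<noteq> j" for i j e
  proof -
    have "(i,j,e) \<in> IO" using that by (simp add: IO_def D_def)
    then have "c \<notin> BO (i,j,e)" using cB by (auto simp: Bad_def)
    then show ?thesis using cU by (auto simp: BO_def cardH)
  qed
  have GB: "real (card {i\<in>D. c (i,m) = (c (i,m') = e)}) < real d / 2 + real d / 16"
    if "m < h" "m' < h" "m \<noteq> m'" for m m' e
  proof -
    have "(m,m',e) \<in> IB" using that by (simp add: IB_def H_def)
    then have "c \<notin> BB (m,m',e)" using cB by (auto simp: Bad_def)
    then show ?thesis using cU by (auto simp: BB_def cardD \<epsilon>2_def)
  qed
  define P where "P = (\<lambda>i l. {x\<in>{..<n}. (c (i, x div 2) = even x) \<noteq> l})"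
  define B where "B = map (\<lambda>i. (P i False, P i True)) [0..<d]"
  have lenB: "length B = d" by (simp add: B_def)
  have Bi: "B ! i = (P i False, P i True)" if "i < d" for i using that by (simp add: B_def)
  have partB: "Defs.part (B ! i) l = P i l" if "i < d" for i l
    using Bi[OF that] by (cases l) (simp_all add: Defs.part_def)
  have cardP: "card (P i l) = h" for i l
  proof -
    have "P i l = {x\<in>{..<2*h}. (\<lambda>m b. (c (i, m) = b) \<noteq> l) (x div 2) (even x)}"
      by (simp add: P_def nh)
    also have "card \<dots> = card {m\<in>{..<h}. (\<lambda>m b. (c (i, m) = b) \<noteq> l) m True \<or> (\<lambda>m b. (c (i, m) = b) \<noteq> l) m False}"
      by (rule pairs_card) auto
    also have "{m\<in>{..<h}. (\<lambda>m b. (c (i, m) = b) \<noteq> l) m True \<or> (\<lambda>m b. (c (i, m) = b) \<noteq> l) m False} = {..<h}"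
      by auto
    finally show ?thesis by simp
  qed
  have eqb: "equitable_bipartition {..<n} Q" if "Q \<in> set B" for Q
  proof -
    obtain i where i: "i < d" "Q = (P i False, P i True)" using \<open>Q \<in> set B\<close> by (auto simp: B_def)
    have "card (P i False) = card (P i True)" using cardP by simp
    then show ?thesis unfolding equitable_bipartition_def using i by (auto simp: P_def)
  qed
  have orth: "alpha_orthogonal {..<n} B \<alpha>"
    unfolding alpha_orthogonal_def
  proof (intro allI impI)
    fix i j l l' assume ij: "i < j \<and> j < length B"
    then have ij': "i < d" "j < d" "i \<noteq> j" using lenB by auto
    define Q where "Q = (\<lambda>m b. (c (i, m) = b) \<noteq> l \<and> (c (j, m) = b) \<noteq> l')"
    have eq1: "P i l \<inter> P j l' = {x\<in>{..<2*h}. Q (x div 2) (even x)}"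
      unfolding P_def nh Q_def by blast
    have eq2: "card {x\<in>{..<2*h}. Q (x div 2) (even x)} = card {m\<in>{..<h}. Q m True \<or> Q m False}"
      by (rule pairs_card) (cases l; simp add: Q_def)
    have eq3: "{m\<in>{..<h}. Q m True \<or> Q m False} = {m\<in>H. c (i,m) = (c (j,m) = (l = l'))}"
    proof (rule set_eqI)
      fix m
      show "m \<in> {m\<in>{..<h}. Q m True \<or> Q m False} \<longleftrightarrow> m \<in> {m\<in>H. c (i,m) = (c (j,m) = (l = l'))}"
        unfolding H_def Q_def by (cases l; cases l'; cases "c (i, m)"; cases "c (j, m)"; simp)
    qed
    have eq: "card (P i l \<inter> P j l') = card {m\<in>H. c (i,m) = (c (j,m) = (l = l'))}"
      unfolding eq1 eq2 eq3 ..
    have "real (card (P i l \<inter> P j l')) < real h / 2 + \<epsilon>1" unfolding eq by (rule GO[OF ij'])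
    also have "real h / 2 + \<epsilon>1 = (1/4 + \<alpha>) * real (card {..<n})" by (simp add: \<epsilon>1_def nh field_simps)
    finally show "real (card (Defs.part (B ! i) l \<inter> Defs.part (B ! j) l')) \<le> (1/4 + \<alpha>) * real (card {..<n})"
      using partB ij' by simp
  qed
  have bal: "beta_balanced {..<n} B (1/16)"
    unfolding beta_balanced_def
  proof (intro ballI impI)
    fix x y assume x: "x \<in> {..<n}" and y: "y \<in> {..<n}" and xy: "x \<noteq> y"
    let ?S = "{i. i < length B \<and> ((x \<in> fst (B ! i) \<and> y \<in> fst (B ! i)) \<or> (x \<in> snd (B ! i) \<and> y \<in> snd (B ! i)))}"
    have S: "?S = {i. i < d \<and> ((c (i, x div 2) = even x) = (c (i, y div 2) = even y))}"
      using x y by (auto simp: lenB Bi P_def)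
    show "real (card ?S) \<le> (1/2 + 1/16) * real (length B)"
    proof (cases "x div 2 = y div 2")
      case True
      have "even x \<noteq> even y"
      proof
        assume "even x = even y"
        then have "x mod 2 = y mod 2" by (metis even_iff_mod_2_eq_zero odd_iff_mod_2_eq_one)
        then show False using True xy by (metis div_mult_mod_eq)
      qed
      then have "?S = {}" unfolding S using True by auto
      then have "card ?S = 0" by (simp only: card.empty)
      then show ?thesis by (simp only: of_nat_0) simp
    next
      case False
      have "?S = {i\<in>D. c (i, x div 2) = (c (i, y div 2) = (even x = even y))}"
        unfolding S by (auto simp: D_def)
      moreover have "x div 2 < h" "y div 2 < h" using x y nh by auto
      ultimately have "real (card ?S) < real d / 2 + real d / 16" using GB False by simp
      then show ?thesis by (simp add: lenB)
    qed
  qed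
  have "ndab_sequence {..<n} B n d \<alpha> (1/16)"
    unfolding ndab_sequence_def using eqb orth bal lenB assms(2) by auto
  then show ?thesis unfolding \<alpha>_def by blast
qed

end
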